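(* Let $\Gamma$ be a set and $\Lambda:\Gamma\to\mathbb R^{m\times n}$ with sparsity pattern $S$. Let $L\in\mathbb R^{m\times m}$ be invertible and let $\hat S$ be the sparsity pattern of $\hat\Lambda(\cdot):=L^\top\Lambda(\cdot)$. Let $\sigma$ be a permutation of $\{1,\dots,m\}$ with $L_{i,\sigma(i)}\ne0$ for all $i$ and $P$ its permutation matrix, $Pe_i=e_{\sigma(i)}$. Assume that for every $j\in\{1,\dots,n\}$, $\operatorname{span}(\Lambda_{\cdot,j}(\Gamma))=\mathbb R^m_{S_{\cdot,j}}$. Then $S\subset P^\top\hat S$ (as sets of nonzero entries). If moreover $\|\hat S\|_0\le\|S\|_0$, then $S=P^\top\hat S$ and $L=CP^\top$ for some $S$-consistent matrix $C$.
   Context: Sparsity pattern: for $\Lambda:\Gamma\to\mathbb R^{m\times n}$, the binary matrix $S$ with $S_{i,j}=1$ iff there exists $\gamma\in\Gamma$ with $\Lambda_{i,j}(\gamma)\neq0$. $\Lambda_{\cdot,j}$ denotes the $j$-th column. For a binary vector $b\in\{0,1\}^m$, $\mathbb R^m_b=\{x\in\mathbb R^m: b_i=0\Rightarrow x_i=0\}$; $S_{\cdot,j}$ is the $j$-th column of $S$. $\|\cdot\|_0$ counts nonzero entries. $S$-consistency: for $S\in\{0,1\}^{m\times n}$, $C\in\mathbb R^{m\times m}$ is $S$-consistent iff for all $i,j$: $[\mathbb 1-S(\mathbb 1-S)^\top]^+_{i,j}=0\Rightarrow C_{i,j}=0$, with $[\cdot]^+=\max\{0,\cdot\}$ entrywise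 and $\mathbb 1$ an all-ones matrix of appropriate size. *)

theory Defs
  imports "HOL-Analysis.Analysis"
begin

text \<open>Matrices in R^(m x n) are rendered as real^'n^'m (rows indexed by 'm, columns by 'n).
Binary matrices are real matrices with entries in {0,1}.\<close>

definition sparsity_pattern :: "'g set \<Rightarrow> ('g \<Rightarrow> real^'n^'m) \<Rightarrow> real^'n^'m" where
  "sparsity_pattern \<Gamma> \<Lambda> = (\<chi> i j. if \<exists>\<gamma>\<in>\<Gamma>. \<Lambda> \<gamma> $ i $ j \<noteq> 0 then 1 else 0)"

definition masked_space :: "real^'m \<Rightarrow> (real^'m) set" where
  "masked_space b = {x. \<forall>i. b $ i = 0 \<longrightarrow> x $ i = 0}"

definition perm_matrix :: "('m \<Rightarrow> 'm) \<Rightarrow> real^'m^'m" where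
  "perm_matrix \<sigma> = (\<chi> k i. if k = \<sigma> i then 1 else 0)"

definition nonzeros :: "real^'n^'m \<Rightarrow> ('m \<times> 'n) set" where
  "nonzeros A = {(i, j). A $ i $ j \<noteq> 0}"

definition norm0 :: "real^'n^'m \<Rightarrow> nat" where
  "norm0 A = card (nonzeros A)"

definition ones_mat :: "real^'n^'m" where
  "ones_mat = (\<chi> i j. 1)"

definition pos_part :: "real^'n^'m \<Rightarrow> real^'n^'m" where
  "pos_part A = (\<chi> i j. max 0 (A $ i $ j))"

definition S_consistent :: "real^'n^'m \<Rightarrow> real^'m^'m \<Rightarrow> bool" where
  "S_consistent S C \<longleftrightarrow>
     (\<forall>i j. pos_part ((ones_mat :: real^'m^'m) - S ** transpose ((ones_mat :: real^'n^'m) - S)) $ i $ j = 0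
            \<longrightarrow> C $ i $ j = 0)"

end

theory Submission
  imports Defs
begin

lemma sp_entry:
  "sparsity_pattern \<Gamma> \<Lambda> $ i $ j = (if \<exists>\<gamma>\<in>\<Gamma>. \<Lambda> \<gamma> $ i $ j \<noteq> 0 then 1 else 0)"
  by (simp add: sparsity_pattern_def)

lemma Pt_mult_entry:
  "(transpose (perm_matrix \<sigma>) ** M) $ i $ j = M $ \<sigma> i $ j"
proof -
  have "(transpose (perm_matrix \<sigma>) ** M) $ i $ j
        = (\<Sum>k\<in>UNIV. (if k = \<sigma> i then 1 else 0) * M $ k $ j)"
    by (simp add: matrix_matrix_mult_def transpose_def perm_matrix_def)
  also have "\<dots> = (\<Sum>k\<in>UNIV. (if k = \<sigma> i then M $ k $ j else 0))"
    by (rule sum.cong) auto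
  also have "\<dots> = M $ \<sigma> i $ j" by simp
  finally show ?thesis .
qed

lemma LtL_entry:
  "(transpose L ** A) $ k $ j = column k L \<bullet> column j A"
  by (simp add: matrix_matrix_mult_def transpose_def column_def inner_vec_def)

lemma key:
  fixes \<Lambda> :: "'g \<Rightarrow> real^'n^'m" and v :: "real^'m"
  assumes span: "span ((\<lambda>\<gamma>. column j (\<Lambda> \<gamma>)) ` \<Gamma>)
               = masked_space (column j (sparsity_pattern \<Gamma> \<Lambda>))"
    and orth: "\<forall>\<gamma>\<in>\<Gamma>. v \<bullet> column j (\<Lambda> \<gamma>) = 0"
    and nz: "sparsity_pattern \<Gamma> \<Lambda> $ i $ j \<noteq> 0"
  shows "v $ i = 0"
proof -
  have "axis i 1 \<in> masked_space (column j (sparsity_pattern \<Gamma> \<Lambda>))"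
    using nz by (auto simp: masked_space_def column_def axis_def)
  hence "axis i 1 \<in> span ((\<lambda>\<gamma>. column j (\<Lambda> \<gamma>)) ` \<Gamma>)" using span by simp
  hence "orthogonal v (axis i 1)"
    by (rule orthogonal_to_span) (use orth in \<open>auto simp: orthogonal_def\<close>)
  thus ?thesis by (simp add: orthogonal_def inner_axis)
qed

lemma Sh_zero:
  fixes \<Lambda> :: "'g \<Rightarrow> real^'n^'m" and L :: "real^'m^'m"
  assumes "sparsity_pattern \<Gamma> (\<lambda>\<gamma>. transpose L ** \<Lambda> \<gamma>) $ k $ j = 0"
  shows "\<forall>\<gamma>\<in>\<Gamma>. column k L \<bullet> column j (\<Lambda> \<gamma>) = 0"
  using assms by (auto simp: sp_entry LtL_entry split: if_splits)

theorem mainTheorem4: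
  fixes \<Gamma> :: "'g set" and \<Lambda> :: "'g \<Rightarrow> real^'n^'m"
    and L :: "real^'m^'m" and \<sigma> :: "'m \<Rightarrow> 'm"
  assumes "invertible L"
    and "\<sigma> permutes UNIV"
    and "\<forall>i. L $ i $ \<sigma> i \<noteq> 0"
    and "\<forall>j. span ((\<lambda>\<gamma>. column j (\<Lambda> \<gamma>)) ` \<Gamma>)
               = masked_space (column j (sparsity_pattern \<Gamma> \<Lambda>))"
  shows "nonzeros (sparsity_pattern \<Gamma> \<Lambda>)
           \<subseteq> nonzeros (transpose (perm_matrix \<sigma>) ** sparsity_pattern \<Gamma> (\<lambda>\<gamma>. transpose L ** \<Lambda> \<gamma>))
    \<and> (norm0 (sparsity_pattern \<Gamma> (\<lambda>\<gamma>. transpose L ** \<Lambda> \<gamma>)) \<le> norm0 (sparsity_pattern \<Gamma> \<Lambda>)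
       \<longrightarrow> sparsity_pattern \<Gamma> \<Lambda>
             = transpose (perm_matrix \<sigma>) ** sparsity_pattern \<Gamma> (\<lambda>\<gamma>. transpose L ** \<Lambda> \<gamma>)
         \<and> (\<exists>C. S_consistent (sparsity_pattern \<Gamma> \<Lambda>) C \<and> L = C ** transpose (perm_matrix \<sigma>)))"
proof -
  define S where "S = sparsity_pattern \<Gamma> \<Lambda>"
  define Sh where "Sh = sparsity_pattern \<Gamma> (\<lambda>\<gamma>. transpose L ** \<Lambda> \<gamma>)"
  have PS: "\<And>i j. (transpose (perm_matrix \<sigma>) ** Sh) $ i $ j = Sh $ \<sigma> i $ j"
    by (rule Pt_mult_entry)
  have S01: "\<And>i j. S $ i $ j = 0 \<or> S $ i $ j = 1" by (simp add: S_def sp_entry)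
  have Sh01: "\<And>i j. Sh $ i $ j = 0 \<or> Sh $ i $ j = 1" by (simp add: Sh_def sp_entry)
  have colL: "\<And>i k. column k L $ i = L $ i $ k" by (simp add: column_def)
  have sub: "nonzeros S \<subseteq> nonzeros (transpose (perm_matrix \<sigma>) ** Sh)"
  proof
    fix x assume "x \<in> nonzeros S"
    then obtain i j where x: "x = (i, j)" and nz: "S $ i $ j \<noteq> 0"
      by (auto simp: nonzeros_def)
    have "Sh $ \<sigma> i $ j \<noteq> 0"
    proof
      assume "Sh $ \<sigma> i $ j = 0"
      hence "\<forall>\<gamma>\<in>\<Gamma>. column (\<sigma> i) L \<bullet> column j (\<Lambda> \<gamma>) = 0"
        unfolding Sh_def by (rule Sh_zero)
      hence "column (\<sigma> i) L $ i = 0"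
        using key[OF assms(4)[rule_format, of j]] nz unfolding S_def by blast
      thus False using assms(3) by (simp add: colL)
    qed
    thus "x \<in> nonzeros (transpose (perm_matrix \<sigma>) ** Sh)"
      by (simp add: x nonzeros_def PS)
  qed
  moreover have "norm0 Sh \<le> norm0 S \<longrightarrow> S = transpose (perm_matrix \<sigma>) ** Sh
         \<and> (\<exists>C. S_consistent S C \<and> L = C ** transpose (perm_matrix \<sigma>))"
  proof
    assume le: "norm0 Sh \<le> norm0 S"
    have inj: "inj (\<lambda>(i::'m, j::'n). (\<sigma> i, j))"
      using permutes_inj[OF assms(2)] by (auto simp: inj_def)
    have img: "nonzeros Sh = (\<lambda>(i, j). (\<sigma> i, j)) ` nonzeros (transpose (perm_matrix \<sigma>) ** Sh)"
    proof (auto simp: nonzeros_def PS image_iff)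
      fix a b assume "Sh $ a $ b \<noteq> 0"
      moreover have "\<sigma> (inv \<sigma> a) = a" using permutes_inverses(1)[OF assms(2)] by simp
      ultimately show "\<exists>x. Sh $ \<sigma> x $ b \<noteq> 0 \<and> a = \<sigma> x" by metis
    qed
    have "card (nonzeros Sh) = card (nonzeros (transpose (perm_matrix \<sigma>) ** Sh))"
      unfolding img by (rule card_image) (use inj in \<open>auto simp: inj_on_def\<close>)
    hence eqN: "nonzeros S = nonzeros (transpose (perm_matrix \<sigma>) ** Sh)"
      using le sub card_mono[OF finite sub] by (intro card_subset_eq) (auto simp: norm0_def)
    have Seq: "S = transpose (perm_matrix \<sigma>) ** Sh"
    proof (rule vec_eq_iff[THEN iffD2], rule allI, rule vec_eq_iff[THEN iffD2], rule allI)
      fix i j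
      have "(S $ i $ j \<noteq> 0) = (Sh $ \<sigma> i $ j \<noteq> 0)"
        using eqN by (auto simp: nonzeros_def PS set_eq_iff)
      thus "S $ i $ j = (transpose (perm_matrix \<sigma>) ** Sh) $ i $ j"
        using S01[of i j] Sh01[of "\<sigma> i" j] by (auto simp: PS)
    qed
    define C :: "real^'m^'m" where "C = (\<chi> i k. L $ i $ \<sigma> k)"
    have "L = C ** transpose (perm_matrix \<sigma>)"
    proof (rule vec_eq_iff[THEN iffD2], rule allI, rule vec_eq_iff[THEN iffD2], rule allI)
      fix i l
      have "(C ** transpose (perm_matrix \<sigma>)) $ i $ l
          = (\<Sum>k\<in>UNIV. (\<lambda>k'. if l = k' then L $ i $ k' else 0) (\<sigma> k))"
        by (simp add: matrix_matrix_mult_def transpose_def perm_matrix_def C_def if_distrib cong: if_cong)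
      also have "\<dots> = (\<Sum>k\<in>UNIV. (if l = k then L $ i $ k else 0))"
        using sum.permute[OF assms(2), of "\<lambda>k'. if l = k' then L $ i $ k' else 0"]
        by (simp add: comp_def)
      also have "\<dots> = L $ i $ l" by simp
      finally show "L $ i $ l = (C ** transpose (perm_matrix \<sigma>)) $ i $ l" by simp
    qed
    moreover have "S_consistent S C"
      unfolding S_consistent_def
    proof (intro allI impI)
      fix i k
      assume "pos_part ((ones_mat :: real^'m^'m) - S ** transpose ((ones_mat :: real^'n^'m) - S)) $ i $ k = 0"
      hence "(\<Sum>j\<in>UNIV. S $ i $ j * (1 - S $ k $ j)) \<ge> 1"
        by (simp add: pos_part_def ones_mat_def matrix_matrix_mult_def transpose_def)
      hence "(\<Sum>j\<in>UNIV. S $ i $ j * (1 - S $ k $ j)) \<noteq> 0" by linarith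
      then obtain j where "S $ i $ j * (1 - S $ k $ j) \<noteq> 0"
        by (meson sum.neutral)
      hence nz: "S $ i $ j \<noteq> 0" and z: "S $ k $ j = 0" using S01[of k j] by auto
      have "Sh $ \<sigma> k $ j = 0" using z Seq PS by metis
      hence "\<forall>\<gamma>\<in>\<Gamma>. column (\<sigma> k) L \<bullet> column j (\<Lambda> \<gamma>) = 0"
        unfolding Sh_def by (rule Sh_zero)
      hence "column (\<sigma> k) L $ i = 0"
        using key[OF assms(4)[rule_format, of j]] nz unfolding S_def by blast
      thus "C $ i $ k = 0" by (simp add: colL C_def)
    qed
    ultimately show "S = transpose (perm_matrix \<sigma>) ** Sh
         \<and> (\<exists>C. S_consistent S C \<and> L = C ** transpose (perm_matrix \<sigma>))"
      using Seq by blast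
  qed
  ultimately show ?thesis unfolding S_def Sh_def by blast
qed

end
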